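(* Let $N\ge1$, $a_i>0$ with $\sum_{i=1}^Na_i=1$, and $x_i\in\mathsf X$ with $x_i\ne x_j$ for $i\ne j$; set $\bar\mu=\sum_{i=1}^Na_i\delta_{x_i}$. Let $\mu:[0,+\infty)\to\mathcal P_2(\mathsf X)$ with $\mu_0=\bar\mu$ be such that $\#\operatorname{supp}(\mu_t)$ is finite and non-increasing in $t\ge0$. Assume that $\boldsymbol\eta\in\mathcal P(\mathrm C([0,+\infty);\mathsf X))$ satisfies $(\mathsf e_t)_\sharp\boldsymbol\eta=\mu_t$ for every $t\ge0$. Then $\boldsymbol\eta=\sum_{i=1}^Na_i\delta_{\gamma_i}$ for curves $\gamma_i\in\mathrm C([0,+\infty);\mathsf X)$ such that (P1) $\gamma_i\ne\gamma_j$ for $i\ne j$; (P2) $\gamma_i(0)=x_i$, $i=1,\dots,N$; (P3) if $\gamma_i(s)=\gamma_j(s)$ for some $s\ge0$ and $i\ne j$, then $\gamma_i(t)=\gamma_j(t)$ for every $t\ge s$. In particular, if $\boldsymbol\eta_1,\boldsymbol\eta_2\in\mathcal P(\mathrm C([0,+\infty);\mathsf X))$ satisfy $(\mathsf e_t)_\sharp\boldsymbol\eta_1=(\mathsf e_t)_\sharp\boldsymbol\eta_2=\mu_t$ for every $t\ge0$, then $\boldsymbol\eta_1=\boldsymbol\eta_2$.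
   Context: $\mathsf X$ is a separable Hilbert space; $\mathrm C([0,+\infty);\mathsf X)$ carries the topology of uniform convergence on compact sets and $\mathcal P(\cdot)$ denotes Borel probability measures; $\mathsf e_t(\gamma)=\gamma(t)$; $\operatorname{supp}$ is the support of a measure. *)

theory Defs
  imports "HOL-Analysis.Analysis" "HOL-Probability.Probability"
begin

text \<open>Curves on [0,+infinity): continuous on {0..}, and normalised to be undefined
  for negative times (so that a curve is determined by its values on [0,+infinity)).\<close>
definition curves :: "(real \<Rightarrow> 'a::topological_space) set" where
  "curves = {\<gamma>. continuous_on {0..} \<gamma> \<and> \<gamma> \<in> extensional {0..}}"

definition ucc_topology :: "(real \<Rightarrow> 'a::metric_space) topology" where
  "ucc_topology = topology (\<lambda>U. U \<subseteq> curves \<and>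
     (\<forall>\<gamma>\<in>U. \<exists>T>0. \<exists>e>0. {\<eta>\<in>curves. \<forall>t\<in>{0..T}. dist (\<eta> t) (\<gamma> t) < e} \<subseteq> U))"

definition path_borel :: "(real \<Rightarrow> 'a::metric_space) measure" where
  "path_borel = sigma curves {U. openin ucc_topology U}"

definition dirac_sum :: "'b measure \<Rightarrow> nat \<Rightarrow> (nat \<Rightarrow> real) \<Rightarrow> (nat \<Rightarrow> 'b) \<Rightarrow> 'b measure" where
  "dirac_sum M N a p = measure_of (space M) (sets M)
     (\<lambda>A. \<Sum>i<N. ennreal (a i) * indicator A (p i))"

definition msupp :: "'a::metric_space measure \<Rightarrow> 'a set" where
  "msupp m = {x. \<forall>e>0. emeasure m (ball x e) > 0}"

definition P2 :: "'a::real_normed_vector measure set" where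
  "P2 = {m. sets m = sets borel \<and> prob_space m \<and> (\<integral>\<^sup>+ x. ennreal ((norm x)\<^sup>2) \<partial>m) < \<infinity>}"

definition lifts :: "(real \<Rightarrow> 'a::real_normed_vector measure) \<Rightarrow> (real \<Rightarrow> 'a) measure \<Rightarrow> bool" where
  "lifts \<mu> \<eta> \<longleftrightarrow> prob_space \<eta> \<and> sets \<eta> = sets path_borel \<and>
     (\<forall>t\<ge>0. distr \<eta> borel (\<lambda>\<gamma>. \<gamma> t) = \<mu> t)"

end

theory Submission
  imports Defs
begin


definition ucc_pred :: "(real \<Rightarrow> 'a::metric_space) set \<Rightarrow> bool" where
  "ucc_pred = (\<lambda>U. U \<subseteq> curves \<and>
     (\<forall>\<gamma>\<in>U. \<exists>T>0. \<exists>e>0. {\<eta>\<in>curves. \<forall>t\<in>{0..T}. dist (\<eta> t) (\<gamma> t) < e} \<subseteq> U))"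

lemma istopology_ucc: "istopology (ucc_pred :: (real \<Rightarrow> 'a::metric_space) set \<Rightarrow> bool)"
  unfolding istopology_def ucc_pred_def
proof (intro conjI allI impI)
  fix S T :: "(real \<Rightarrow> 'a) set"
  assume S: "S \<subseteq> curves \<and> (\<forall>\<gamma>\<in>S. \<exists>T>0. \<exists>e>0. {\<eta> \<in> curves. \<forall>t\<in>{0..T}. dist (\<eta> t) (\<gamma> t) < e} \<subseteq> S)"
    and T: "T \<subseteq> curves \<and> (\<forall>\<gamma>\<in>T. \<exists>Ta>0. \<exists>e>0. {\<eta> \<in> curves. \<forall>t\<in>{0..Ta}. dist (\<eta> t) (\<gamma> t) < e} \<subseteq> T)"
  show "S \<inter> T \<subseteq> curves" using S by auto
  show "\<forall>\<gamma>\<in>S \<inter> T. \<exists>Ta>0. \<exists>e>0. {\<eta> \<in> curves. \<forall>t\<in>{0..Ta}. dist (\<eta> t) (\<gamma> t) < e} \<subseteq> S \<inter> T"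
  proof
    fix \<gamma> assume g: "\<gamma> \<in> S \<inter> T"
    then obtain T1 e1 where 1: "T1 > 0" "e1 > 0" "{\<eta> \<in> curves. \<forall>t\<in>{0..T1}. dist (\<eta> t) (\<gamma> t) < e1} \<subseteq> S"
      using S by blast
    obtain T2 e2 where 2: "T2 > 0" "e2 > 0" "{\<eta> \<in> curves. \<forall>t\<in>{0..T2}. dist (\<eta> t) (\<gamma> t) < e2} \<subseteq> T"
      using T g by blast
    show "\<exists>Ta>0. \<exists>e>0. {\<eta> \<in> curves. \<forall>t\<in>{0..Ta}. dist (\<eta> t) (\<gamma> t) < e} \<subseteq> S \<inter> T"
    proof (intro exI conjI)
      show "max T1 T2 > 0" "min e1 e2 > 0" using 1 2 by auto
      show "{\<eta> \<in> curves. \<forall>t\<in>{0..max T1 T2}. dist (\<eta> t) (\<gamma> t) < min e1 e2} \<subseteq> S \<inter> T"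
        using 1(3) 2(3) by fastforce
    qed
  qed
next
  fix K :: "(real \<Rightarrow> 'a) set set"
  assume K: "\<forall>S\<in>K. S \<subseteq> curves \<and> (\<forall>\<gamma>\<in>S. \<exists>T>0. \<exists>e>0. {\<eta> \<in> curves. \<forall>t\<in>{0..T}. dist (\<eta> t) (\<gamma> t) < e} \<subseteq> S)"
  then show "\<Union> K \<subseteq> curves" by blast
  show "\<forall>\<gamma>\<in>\<Union> K. \<exists>T>0. \<exists>e>0. {\<eta> \<in> curves. \<forall>t\<in>{0..T}. dist (\<eta> t) (\<gamma> t) < e} \<subseteq> \<Union> K"
  proof
    fix \<gamma> assume "\<gamma> \<in> \<Union>K"
    then obtain S where "S \<in> K" "\<gamma> \<in> S" by blast
    with K obtain T e where "T>0" "e>0" "{\<eta> \<in> curves. \<forall>t\<in>{0..T}. dist (\<eta> t) (\<gamma> t) < e} \<subseteq> S" by blast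
    then show "\<exists>T>0. \<exists>e>0. {\<eta> \<in> curves. \<forall>t\<in>{0..T}. dist (\<eta> t) (\<gamma> t) < e} \<subseteq> \<Union> K"
      using \<open>S \<in> K\<close> by blast
  qed
qed

lemma openin_ucc: "openin ucc_topology U \<longleftrightarrow> ucc_pred U"
  unfolding ucc_topology_def ucc_pred_def[symmetric]
  by (simp add: topology_inverse'[OF istopology_ucc])

lemma space_path_borel: "space path_borel = curves"
  unfolding path_borel_def
  by (rule space_measure_of) (auto simp: openin_ucc ucc_pred_def)

lemma sets_path_borel: "sets path_borel = sigma_sets curves {U. openin ucc_topology U}"
  unfolding path_borel_def
  by (rule sets_measure_of) (auto simp: openin_ucc ucc_pred_def)

lemma eval_preimage_open:
  fixes V :: "'a::metric_space set"
  assumes "t \<ge> 0" "open V"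
  shows "openin ucc_topology {\<gamma>\<in>curves. \<gamma> t \<in> V}"
  unfolding openin_ucc ucc_pred_def
proof (intro conjI ballI)
  fix \<gamma> assume g: "\<gamma> \<in> {\<gamma> \<in> curves. \<gamma> t \<in> V}"
  then obtain e where e: "e > 0" "ball (\<gamma> t) e \<subseteq> V" using assms open_contains_ball by blast
  show "\<exists>T>0. \<exists>e>0. {\<eta> \<in> curves. \<forall>t\<in>{0..T}. dist (\<eta> t) (\<gamma> t) < e} \<subseteq> {\<gamma> \<in> curves. \<gamma> t \<in> V}"
  proof (intro exI conjI)
    show "t + 1 > 0" using assms by simp
    show "e > 0" by fact
    show "{\<eta> \<in> curves. \<forall>t\<in>{0..t+1}. dist (\<eta> t) (\<gamma> t) < e} \<subseteq> {\<gamma> \<in> curves. \<gamma> t \<in> V}"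
      using e assms by (auto simp: dist_commute subset_eq)
  qed
qed auto

lemma eval_measurable_pb:
  assumes "t \<ge> 0"
  shows "(\<lambda>\<gamma>. \<gamma> t) \<in> measurable path_borel (borel :: 'a::metric_space measure)"
proof (rule borel_measurableI)
  fix V :: "'a set" assume "open V"
  have "(\<lambda>\<gamma>. \<gamma> t) -` V \<inter> space path_borel = {\<gamma>\<in>curves. \<gamma> t \<in> V}"
    by (auto simp: space_path_borel)
  also have "\<dots> \<in> sets path_borel"
    unfolding sets_path_borel using eval_preimage_open[OF assms \<open>open V\<close>] by auto
  finally show "(\<lambda>\<gamma>. \<gamma> t) -` V \<inter> space path_borel \<in> sets path_borel" .
qed

lemma eval_measurable:
  assumes "t \<ge> 0" "sets M = sets path_borel"
  shows "(\<lambda>\<gamma>. \<gamma> t) \<in> measurable M (borel :: 'a::metric_space measure)"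
  by (subst measurable_cong_sets[OF assms(2) refl]) (rule eval_measurable_pb[OF assms(1)])

lemma sets_dirac_sum: "sets (dirac_sum M N a p) = sets M"
  unfolding dirac_sum_def by (simp add: sets.sets_measure_of_eq)

lemma emeasure_dirac_sum:
  assumes "A \<in> sets M"
  shows "emeasure (dirac_sum M N a p) A = (\<Sum>i<N. ennreal (a i) * indicator A (p i))"
proof (rule emeasure_measure_of[OF dirac_sum_def])
  show "sets M \<subseteq> Pow (space M)" by (rule sets.space_closed)
  show "positive (sets (dirac_sum M N a p)) (\<lambda>A. \<Sum>i<N. ennreal (a i) * indicator A (p i))"
    by (simp add: positive_def)
  show "countably_additive (sets (dirac_sum M N a p)) (\<lambda>A. \<Sum>i<N. ennreal (a i) * indicator A (p i))"
    unfolding countably_additive_def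
  proof (intro allI impI)
    fix A :: "nat \<Rightarrow> _" assume "range A \<subseteq> sets (dirac_sum M N a p)" "disjoint_family A"
    then have "(\<Sum>n. \<Sum>i<N. ennreal (a i) * indicator (A n) (p i)) = (\<Sum>i<N. \<Sum>n. ennreal (a i) * indicator (A n) (p i))"
      by (intro suminf_sum) auto
    also have "\<dots> = (\<Sum>i<N. ennreal (a i) * indicator (\<Union>n. A n) (p i))"
      using \<open>disjoint_family A\<close> by (simp add: suminf_indicator)
    finally show "(\<Sum>n. \<Sum>i<N. ennreal (a i) * indicator (A n) (p i)) = (\<Sum>i<N. ennreal (a i) * indicator (\<Union> (range A)) (p i))"
      by simp
  qed
  show "A \<in> sets (dirac_sum M N a p)" using assms by (simp add: sets_dirac_sum)
qed



lemma supp_null: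
  fixes m :: "'a::{metric_space, second_countable_topology} measure"
  assumes sm: "sets m = sets borel" and fin: "finite (msupp m)"
  shows "emeasure m (space m - msupp m) = 0"
proof -
  let ?F = "{ball x e | x e. e > 0 \<and> emeasure m (ball x e) = 0}"
  obtain F' where F': "F' \<subseteq> ?F" "countable F'" "\<Union>F' = \<Union>?F"
    using Lindelof[of ?F] by auto
  have nul: "(\<Union>B\<in>F'. B) \<in> null_sets m"
  proof (rule null_sets_UN'[OF F'(2)])
    fix B assume "B \<in> F'"
    then obtain x e where "B = ball x e" "emeasure m (ball x e) = 0" using F'(1) by blast
    moreover have "ball x e \<in> sets m" using sm by simp
    ultimately show "B \<in> null_sets m" by (simp add: null_sets_def)
  qed
  have sub: "space m - msupp m \<subseteq> \<Union>F'"
  proof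
    fix y assume y: "y \<in> space m - msupp m"
    then obtain e where "e > 0" "\<not> emeasure m (ball y e) > 0" unfolding msupp_def by auto
    then have "ball y e \<in> ?F" by (auto simp: zero_less_iff_neq_zero)
    then have "y \<in> \<Union>?F" using \<open>e > 0\<close> by (intro UnionI[of "ball y e"]) auto
    then show "y \<in> \<Union>F'" using F'(3) by simp
  qed
  have mea: "space m - msupp m \<in> sets m"
    using sm fin by (simp add: sets_eq_imp_space_eq[OF sm] finite_imp_closed borel_closed Diff_eq)
  have "space m - msupp m \<in> null_sets m"
    by (rule null_sets_subset[OF _ mea]) (use nul sub in simp_all)
  then show ?thesis by (rule null_setsD1)
qed

lemma supp_AE:
  fixes m :: "'a::{metric_space, second_countable_topology} measure"
  assumes sm: "sets m = sets borel" and fin: "finite (msupp m)"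
  shows "AE x in m. x \<in> msupp m"
proof -
  have "space m - msupp m \<in> null_sets m"
    using supp_null[OF assms] sm fin
    by (simp add: sets_eq_imp_space_eq[OF sm] finite_imp_closed borel_closed Diff_eq null_sets_def)
  then show ?thesis
    by (rule AE_I') auto
qed

lemma supp_atom:
  fixes m :: "'a::{metric_space, second_countable_topology} measure"
  assumes sm: "sets m = sets borel" and fin: "finite (msupp m)" and z: "z \<in> msupp m"
  shows "emeasure m {z} > 0"
proof -
  obtain d where d: "d > 0" "\<forall>x\<in>msupp m. x \<noteq> z \<longrightarrow> d \<le> dist z x"
    using finite_set_avoid[OF fin, of z] by blast
  have pos: "emeasure m (ball z d) > 0" using z d unfolding msupp_def by auto
  have "ball z d \<subseteq> {z} \<union> (space m - msupp m)"
    using d by (auto simp: sets_eq_imp_space_eq[OF sm])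
  then have "emeasure m (ball z d) \<le> emeasure m ({z} \<union> (space m - msupp m))"
    by (intro emeasure_mono) (auto simp: sm sets_eq_imp_space_eq[OF sm] fin finite_imp_closed borel_closed Diff_eq)
  also have "\<dots> \<le> emeasure m {z} + emeasure m (space m - msupp m)"
    by (intro emeasure_subadditive) (auto simp: sm sets_eq_imp_space_eq[OF sm] fin finite_imp_closed borel_closed Diff_eq)
  also have "\<dots> = emeasure m {z}" using supp_null[OF sm fin] by simp
  finally show ?thesis using pos by simp
qed

lemma curve_cont: "\<gamma> \<in> curves \<Longrightarrow> continuous_on {0..} \<gamma>"
  by (simp add: curves_def)

lemma agree_interval:
  fixes f g :: "real \<Rightarrow> 'a::metric_space"
  assumes f: "continuous_on {0..} f" and g: "continuous_on {0..} g"
    and ab: "0 \<le> a" "a < b" and agree: "\<forall>q\<in>\<rat>. a < q \<and> q < b \<longrightarrow> f q = g q"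
    and t: "t \<in> {a..b}"
  shows "f t = g t"
proof (rule ccontr)
  assume ne: "f t \<noteq> g t"
  define e where "e = dist (f t) (g t) / 2"
  have e: "e > 0" using ne by (simp add: e_def)
  have t0: "t \<in> {0..}" using t ab by auto
  obtain d1 where d1: "d1 > 0" "\<forall>x\<in>{0..}. dist x t < d1 \<longrightarrow> dist (f x) (f t) < e"
    using f t0 e unfolding continuous_on_iff by blast
  obtain d2 where d2: "d2 > 0" "\<forall>x\<in>{0..}. dist x t < d2 \<longrightarrow> dist (g x) (g t) < e"
    using g t0 e unfolding continuous_on_iff by blast
  define d where "d = min d1 d2"
  have "max a (t - d) < min b (t + d)" using t ab d1 d2 by (auto simp: d_def)
  then obtain q where q: "q \<in> \<rat>" "max a (t - d) < q" "q < min b (t + d)"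
    using Rats_dense_in_real by blast
  have qd: "dist q t < d1" "dist q t < d2" "q \<in> {0..}" using q ab by (auto simp: d_def dist_real_def)
  have "f q = g q" using agree q by auto
  then have "dist (f t) (g t) \<le> dist (f q) (f t) + dist (g q) (g t)"
    by (metis dist_commute dist_triangle)
  also have "\<dots> < e + e" using d1 d2 qd by (intro add_strict_mono) auto
  finally show False by (simp add: e_def)
qed

lemma curves_eqI:
  fixes \<gamma> \<gamma>' :: "real \<Rightarrow> 'a::metric_space"
  assumes "\<gamma> \<in> curves" "\<gamma>' \<in> curves" "\<forall>q\<in>\<rat>. q \<ge> 0 \<longrightarrow> \<gamma> q = \<gamma>' q"
  shows "\<gamma> = \<gamma>'"
proof
  fix t :: real
  show "\<gamma> t = \<gamma>' t"
  proof (cases "t \<ge> 0")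
    case True
    show ?thesis
      by (rule agree_interval[of \<gamma> \<gamma>' 0 "t+1"]) (use assms True in \<open>auto simp: curves_def\<close>)
  next
    case False
    then show ?thesis using assms by (auto simp: curves_def extensional_def)
  qed
qed

lemma eval_eq_meas: "t \<ge> 0 \<Longrightarrow> {\<gamma>\<in>curves. \<gamma> t = (y::'a::metric_space)} \<in> sets path_borel"
proof -
  assume t: "t \<ge> 0"
  have "(\<lambda>\<gamma>. \<gamma> t) -` {y} \<inter> space path_borel \<in> sets path_borel"
    by (rule measurable_sets[OF eval_measurable_pb[OF t]]) simp
  then show ?thesis by (simp add: space_path_borel vimage_def Int_def conj_commute)
qed

lemma singleton_meas:
  fixes \<gamma> :: "real \<Rightarrow> 'a::metric_space"
  assumes g: "\<gamma> \<in> curves"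
  shows "{\<gamma>} \<in> sets path_borel"
proof -
  have "{\<gamma>} = (\<Inter>q\<in>\<rat> \<inter> {0..}. {\<gamma>'\<in>curves. \<gamma>' q = \<gamma> q})"
  proof
    show "{\<gamma>} \<subseteq> (\<Inter>q\<in>\<rat> \<inter> {0..}. {\<gamma>'\<in>curves. \<gamma>' q = \<gamma> q})" using g by auto
    show "(\<Inter>q\<in>\<rat> \<inter> {0..}. {\<gamma>'\<in>curves. \<gamma>' q = \<gamma> q}) \<subseteq> {\<gamma>}"
    proof
      fix \<gamma>' assume h: "\<gamma>' \<in> (\<Inter>q\<in>\<rat> \<inter> {0..}. {\<gamma>'\<in>curves. \<gamma>' q = \<gamma> q})"
      then have "\<gamma>' \<in> curves" by auto
      with h g have "\<gamma>' = \<gamma>" by (intro curves_eqI) auto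
      then show "\<gamma>' \<in> {\<gamma>}" by simp
    qed
  qed
  also have "\<dots> \<in> sets path_borel"
    by (rule sets.countable_INT') (auto intro: eval_eq_meas countable_subset[OF _ countable_rat])
  finally show ?thesis .
qed



lemma finite_sep:
  fixes Z :: "'a::metric_space set"
  assumes "finite Z"
  shows "\<exists>d>0. \<forall>z\<in>Z. \<forall>w\<in>Z. z \<noteq> w \<longrightarrow> d \<le> dist z w"
proof -
  have "\<forall>z\<in>Z. \<exists>d>0. \<forall>w\<in>Z. w \<noteq> z \<longrightarrow> d \<le> dist z w"
    using finite_set_avoid[OF assms] by blast
  then obtain D where D: "\<forall>z\<in>Z. D z > 0 \<and> (\<forall>w\<in>Z. w \<noteq> z \<longrightarrow> D z \<le> dist z w)"
    by metis
  define d where "d = Min (insert 1 (D ` Z))"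
  have "d > 0" unfolding d_def using assms D by (subst Min_gr_iff) auto
  moreover have "\<forall>z\<in>Z. d \<le> D z" unfolding d_def using assms by auto
  ultimately show ?thesis using D by (metis order.trans)
qed

locale liftctx =
  fixes \<eta> :: "(real \<Rightarrow> 'a::{metric_space, second_countable_topology}) measure"
    and \<mu> :: "real \<Rightarrow> 'a measure"
  assumes prob: "prob_space \<eta>"
    and sets_eta: "sets \<eta> = sets path_borel"
    and marg: "\<forall>t\<ge>0. distr \<eta> borel (\<lambda>\<gamma>. \<gamma> t) = \<mu> t"
    and fin: "\<forall>t\<ge>0. finite (msupp (\<mu> t))"
    and mono: "\<forall>s t. 0 \<le> s \<longrightarrow> s \<le> t \<longrightarrow> card (msupp (\<mu> t)) \<le> card (msupp (\<mu> s))"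
begin

lemma space_eta: "space \<eta> = curves"
  using sets_eq_imp_space_eq[OF sets_eta] space_path_borel by simp

lemma meas: "t \<ge> 0 \<Longrightarrow> (\<lambda>\<gamma>. \<gamma> t) \<in> measurable \<eta> borel"
  by (rule eval_measurable[OF _ sets_eta])

lemma sets_mu: "t \<ge> 0 \<Longrightarrow> sets (\<mu> t) = sets borel"
  using marg by (metis sets_distr)

lemma AE_supp: "t \<ge> 0 \<Longrightarrow> AE \<gamma> in \<eta>. \<gamma> t \<in> msupp (\<mu> t)"
proof -
  assume t: "t \<ge> 0"
  have eq: "distr \<eta> borel (\<lambda>\<gamma>. \<gamma> t) = \<mu> t" using marg t by simp
  have "AE x in distr \<eta> borel (\<lambda>\<gamma>. \<gamma> t). x \<in> msupp (\<mu> t)"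
    unfolding eq by (rule supp_AE[OF sets_mu[OF t]]) (use fin t in auto)
  then show ?thesis
    by (subst (asm) AE_distr_iff[OF meas[OF t]])
       (use fin t in \<open>auto simp: finite_imp_closed\<close>)
qed

lemma atom: "t \<ge> 0 \<Longrightarrow> z \<in> msupp (\<mu> t) \<Longrightarrow> emeasure \<eta> {\<gamma>\<in>space \<eta>. \<gamma> t = z} > 0"
proof -
  assume t: "t \<ge> 0" and z: "z \<in> msupp (\<mu> t)"
  have "emeasure (\<mu> t) {z} > 0"
    by (rule supp_atom[OF sets_mu[OF t]]) (use fin t z in auto)
  also have "emeasure (\<mu> t) {z} = emeasure (distr \<eta> borel (\<lambda>\<gamma>. \<gamma> t)) {z}" using marg t by simp
  also have "\<dots> = emeasure \<eta> ((\<lambda>\<gamma>. \<gamma> t) -` {z} \<inter> space \<eta>)"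
    by (rule emeasure_distr[OF meas[OF t]]) simp
  also have "(\<lambda>\<gamma>. \<gamma> t) -` {z} \<inter> space \<eta> = {\<gamma>\<in>space \<eta>. \<gamma> t = z}" by auto
  finally show ?thesis .
qed

lemma exists_in_AE:
  assumes ae: "AE \<gamma> in \<eta>. P \<gamma>" and t: "t \<ge> 0" and pos: "emeasure \<eta> {\<gamma>\<in>space \<eta>. \<gamma> t = z} > 0"
  shows "\<exists>\<gamma>\<in>space \<eta>. P \<gamma> \<and> \<gamma> t = z"
proof (rule ccontr)
  assume "\<not> ?thesis"
  then have "AE \<gamma> in \<eta>. P \<gamma> \<longrightarrow> \<gamma> t \<noteq> z" by (intro AE_I2) blast
  with ae have "AE \<gamma> in \<eta>. \<gamma> t \<noteq> z" by (rule AE_mp)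
  moreover have "{\<gamma>\<in>space \<eta>. \<gamma> t = z} \<in> sets \<eta>"
    using measurable_sets[OF meas[OF t], of "{z}"] by (simp add: vimage_def Int_def conj_commute)
  ultimately have "emeasure \<eta> {\<gamma>\<in>space \<eta>. \<gamma> t = z} = 0"
    by (subst (asm) AE_iff_measurable) auto
  then show False using pos by simp
qed

lemma right_step:
  assumes u: "u \<ge> 0"
  shows "\<exists>\<delta>>0. \<exists>g. AE \<gamma> in \<eta>. \<forall>t\<in>{u..<u+\<delta>}. \<gamma> t = g (\<gamma> u) t"
proof -
  define S where "S t = msupp (\<mu> t)" for t
  define Z where "Z = S u"
  have finZ: "finite Z" using fin u by (simp add: Z_def S_def)
  define \<Omega> where "\<Omega> = {\<gamma>\<in>curves. \<gamma> u \<in> Z \<and> (\<forall>q\<in>\<rat> \<inter> {u<..}. \<gamma> q \<in> S q)}"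
  have AE\<Omega>: "AE \<gamma> in \<eta>. \<gamma> \<in> \<Omega>"
  proof -
    have "AE \<gamma> in \<eta>. \<forall>q\<in>\<rat> \<inter> {u<..}. \<gamma> q \<in> S q"
      by (rule AE_ball_countable') (use AE_supp u in \<open>auto simp: S_def intro: countable_subset[OF _ countable_rat]\<close>)
    moreover have "AE \<gamma> in \<eta>. \<gamma> u \<in> Z" using AE_supp[OF u] by (simp add: Z_def S_def)
    ultimately show ?thesis
      by (elim AE_mp) (auto intro!: AE_I2 simp: \<Omega>_def space_eta)
  qed
  obtain d where d: "d > 0" "\<forall>z\<in>Z. \<forall>w\<in>Z. z \<noteq> w \<longrightarrow> d \<le> dist z w"
    using finite_sep[OF finZ] by blast
  define r where "r = d / 3"
  have r: "r > 0" "2 * r < d" using d by (auto simp: r_def)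
  have ex: "\<exists>\<gamma>'. \<gamma>' \<in> \<Omega> \<and> \<gamma>' u = z" if z: "z \<in> Z" for z
  proof -
    have "emeasure \<eta> {\<gamma>\<in>space \<eta>. \<gamma> u = z} > 0"
      by (rule atom[OF u]) (use z in \<open>simp add: Z_def S_def\<close>)
    from exists_in_AE[OF AE\<Omega> u this] show ?thesis by blast
  qed
  define G where "G z = (SOME \<gamma>'. \<gamma>' \<in> \<Omega> \<and> \<gamma>' u = z)" for z
  have G: "G z \<in> \<Omega> \<and> G z u = z" if "z \<in> Z" for z
    unfolding G_def by (rule someI_ex[OF ex[OF that]])
  have "\<forall>z\<in>Z. \<exists>\<delta>>0. \<forall>t\<in>{0..}. dist t u < \<delta> \<longrightarrow> dist (G z t) z < r"
  proof
    fix z assume z: "z \<in> Z"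
    then have cz: "continuous_on {0..} (G z)" using G by (auto simp: \<Omega>_def curves_def)
    have "\<exists>\<delta>>0. \<forall>t\<in>{0..}. dist t u < \<delta> \<longrightarrow> dist (G z t) (G z u) < r"
      using continuous_on_iff[THEN iffD1, OF cz, rule_format, of u r] u r by simp
    then show "\<exists>\<delta>>0. \<forall>t\<in>{0..}. dist t u < \<delta> \<longrightarrow> dist (G z t) z < r"
      using G[OF z] by simp
  qed
  then obtain D where D: "\<forall>z\<in>Z. D z > 0 \<and> (\<forall>t\<in>{0..}. dist t u < D z \<longrightarrow> dist (G z t) z < r)"
    by metis
  define \<delta> where "\<delta> = Min (insert 1 (D ` Z))"
  have \<delta>: "\<delta> > 0" unfolding \<delta>_def using finZ D by (subst Min_gr_iff) auto
  have \<delta>D: "\<forall>z\<in>Z. \<delta> \<le> D z" unfolding \<delta>_def using finZ by auto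
  have Gball: "dist (G z t) z < r" if "z \<in> Z" "t \<in> {u..<u+\<delta>}" for z t
  proof -
    have "dist t u < D z" using that \<delta>D by (auto simp: dist_real_def)
    then show ?thesis using D that u by auto
  qed
  have Sq: "S q = (\<lambda>z. G z q) ` Z" if q: "q \<in> \<rat>" "u < q" "q < u + \<delta>" for q
  proof -
    have sub: "(\<lambda>z. G z q) ` Z \<subseteq> S q" using G q by (auto simp: \<Omega>_def)
    have inj: "inj_on (\<lambda>z. G z q) Z"
    proof (rule inj_onI, rule ccontr)
      fix z w assume zw: "z \<in> Z" "w \<in> Z" "G z q = G w q" "z \<noteq> w"
      have "dist z w \<le> dist (G z q) z + dist (G w q) w"
        using zw(3) by (metis dist_commute dist_triangle)
      also have "\<dots> < r + r" using Gball[OF zw(1), of q] Gball[OF zw(2), of q] q by simp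
      finally show False using d zw r by force
    qed
    have "card (S q) \<le> card Z" using mono u q by (simp add: S_def Z_def)
    also have "card Z = card ((\<lambda>z. G z q) ` Z)" using card_image[OF inj] by simp
    finally show ?thesis
      using card_seteq[OF _ sub] fin q u by (simp add: S_def)
  qed
  have main: "\<gamma> t = G (\<gamma> u) t" if g: "\<gamma> \<in> \<Omega>" and t: "t \<in> {u..<u+\<delta>}" for \<gamma> t
  proof -
    define z where "z = \<gamma> u"
    have z: "z \<in> Z" using g by (simp add: \<Omega>_def z_def)
    have gc: "continuous_on {0..} \<gamma>" using g by (simp add: \<Omega>_def curves_def)
    define J where "J = {u..<u+\<delta>}"
    have gJ: "continuous_on J \<gamma>" by (rule continuous_on_subset[OF gc]) (use u in \<open>auto simp: J_def\<close>)
    define A where "A = J \<inter> (\<lambda>t. dist (\<gamma> t) z) -` {..r}"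
    define B where "B = (\<Union>w\<in>Z - {z}. J \<inter> (\<lambda>t. dist (\<gamma> t) w) -` {..r})"
    have cA: "closedin (top_of_set J) A"
      unfolding A_def by (rule continuous_closedin_preimage) (auto intro!: continuous_intros gJ)
    have cB: "closedin (top_of_set J) B"
      unfolding B_def using finZ
      by (intro closedin_Union) (auto intro!: continuous_closedin_preimage continuous_intros gJ)
    have disj: "A \<inter> B = {}"
    proof (rule ccontr)
      assume "A \<inter> B \<noteq> {}"
      then obtain s w where sw: "s \<in> J" "dist (\<gamma> s) z \<le> r" "w \<in> Z" "w \<noteq> z" "dist (\<gamma> s) w \<le> r"
        unfolding A_def B_def by auto
      have "dist z w \<le> dist (\<gamma> s) z + dist (\<gamma> s) w" by (metis dist_commute dist_triangle)
      also have "\<dots> \<le> r + r" using sw by simp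
      finally show False using d z sw r by force
    qed
    have cover: "A \<union> B = J"
    proof
      show "A \<union> B \<subseteq> J" unfolding A_def B_def by auto
      show "J \<subseteq> A \<union> B"
      proof
        fix s assume s: "s \<in> J"
        show "s \<in> A \<union> B"
        proof (cases "s = u")
          case True
          then show ?thesis using s r by (simp add: A_def z_def)
        next
          case False
          then have su: "u < s" "s < u + \<delta>" using s by (auto simp: J_def)
          show ?thesis
          proof (rule ccontr)
            assume "s \<notin> A \<union> B"
            then have far: "\<forall>w\<in>Z. r < dist (\<gamma> s) w" using s z
              unfolding A_def B_def by (auto simp: not_le)
            define e where "e = Min ((\<lambda>w. dist (\<gamma> s) w - r) ` Z)"
            have e: "e > 0" unfolding e_def using finZ z far by (subst Min_gr_iff) auto
            have eZ: "\<forall>w\<in>Z. e \<le> dist (\<gamma> s) w - r" unfolding e_def using finZ by auto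
            obtain d' where d': "d' > 0" "\<forall>x\<in>{0..}. dist x s < d' \<longrightarrow> dist (\<gamma> x) (\<gamma> s) < e"
              using gc e su u unfolding continuous_on_iff by (metis atLeast_iff less_eq_real_def order.strict_trans1)
            have "max u (s - d') < min (u + \<delta>) (s + d')" using su d' by auto
            then obtain q where q: "q \<in> \<rat>" "max u (s - d') < q" "q < min (u + \<delta>) (s + d')"
              using Rats_dense_in_real by blast
            have "\<gamma> q \<in> S q" using g q by (auto simp: \<Omega>_def)
            then obtain w where w: "w \<in> Z" "\<gamma> q = G w q" using Sq[of q] q by auto
            have "dist (\<gamma> s) w \<le> dist (\<gamma> q) (\<gamma> s) + dist (G w q) w"
              using w(2) by (metis dist_commute dist_triangle)
            also have "\<dots> < e + r"
              using d' q u Gball[OF w(1), of q]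
              by (intro add_strict_mono) (auto simp: dist_real_def)
            finally show False using eZ w by force
          qed
        qed
      qed
    qed
    have "u \<in> A" using \<delta> r by (simp add: A_def J_def z_def)
    then have "A \<noteq> {}" by blast
    moreover have "connected J" by (simp add: J_def)
    ultimately have "B = {}"
      using connected_closedin_eq[of J] cA cB cover disj by blast
    then have inball: "\<forall>s\<in>J. dist (\<gamma> s) z \<le> r" using cover by (auto simp: A_def)
    have "\<forall>q\<in>\<rat>. u < q \<and> q < u + \<delta> \<longrightarrow> \<gamma> q = G z q"
    proof (intro ballI impI)
      fix q assume q: "q \<in> \<rat>" "u < q \<and> q < u + \<delta>"
      have "\<gamma> q \<in> S q" using g q by (auto simp: \<Omega>_def)
      then obtain w where w: "w \<in> Z" "\<gamma> q = G w q" using Sq[of q] q by auto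
      show "\<gamma> q = G z q"
      proof (cases "w = z")
        case True then show ?thesis using w by simp
      next
        case False
        have "dist z w \<le> dist (\<gamma> q) z + dist (G w q) w"
          using w(2) by (metis dist_commute dist_triangle)
        also have "\<dots> \<le> r + r" using inball q Gball[OF w(1), of q] by (intro add_mono) (auto simp: J_def)
        finally show ?thesis using d z w False r by force
      qed
    qed
    moreover have "continuous_on {0..} (G z)" using G[OF z] by (simp add: \<Omega>_def curves_def)
    ultimately show ?thesis
      unfolding z_def[symmetric]
      by (intro agree_interval[OF gc _ u, where b = "u + \<delta>"]) (use \<delta> t in auto)
  qed
  have "AE \<gamma> in \<eta>. \<forall>t\<in>{u..<u+\<delta>}. \<gamma> t = G (\<gamma> u) t"
    using AE\<Omega> by (elim AE_mp) (auto intro!: AE_I2 main)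
  then show ?thesis using \<delta> by blast
qed

end


context liftctx begin

definition Qp :: "real \<Rightarrow> real \<Rightarrow> bool" where
  "Qp s t \<longleftrightarrow> (\<forall>p. \<exists>y. AE \<gamma> in \<eta>. \<gamma> s = p \<longrightarrow> \<gamma> t = y)"

lemma left_step:
  assumes s: "0 \<le> s" "s < u" and IH: "\<forall>t\<in>{s..<u}. Qp s t"
  shows "Qp s u"
  unfolding Qp_def
proof
  fix p
  have "\<forall>q\<in>\<rat> \<inter> {s..<u}. \<exists>y. AE \<gamma> in \<eta>. \<gamma> s = p \<longrightarrow> \<gamma> q = y"
    using IH unfolding Qp_def by blast
  from bchoice[OF this] obtain Y where Y: "\<forall>q\<in>\<rat> \<inter> {s..<u}. AE \<gamma> in \<eta>. \<gamma> s = p \<longrightarrow> \<gamma> q = Y q"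
    by blast
  have cnt: "countable (\<rat> \<inter> {s..<u})" by (rule countable_subset[OF _ countable_rat]) blast
  have AEY: "AE \<gamma> in \<eta>. \<forall>q\<in>\<rat> \<inter> {s..<u}. \<gamma> s = p \<longrightarrow> \<gamma> q = Y q"
    using AE_ball_countable'[where I="\<rat> \<inter> {s..<u}" and M=\<eta> and P="\<lambda>q \<gamma>. \<gamma> s = p \<longrightarrow> \<gamma> q = Y q"] Y cnt by blast
  define E where "E = {\<gamma>\<in>space \<eta>. \<gamma> s = p \<and> (\<forall>q\<in>\<rat> \<inter> {s..<u}. \<gamma> q = Y q)}"
  show "\<exists>y. AE \<gamma> in \<eta>. \<gamma> s = p \<longrightarrow> \<gamma> u = y"
  proof (cases "E = {}")
    case True
    have "AE \<gamma> in \<eta>. \<gamma> s = p \<longrightarrow> \<gamma> u = undefined"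
      using AEY AE_space
    proof eventually_elim
      case (elim \<gamma>)
      show ?case
      proof
        assume "\<gamma> s = p"
        with elim have "\<gamma> \<in> E" unfolding E_def by blast
        with True show "\<gamma> u = undefined" by blast
      qed
    qed
    then show ?thesis by (rule exI)
  next
    case False
    then obtain \<gamma>0 where g0: "\<gamma>0 \<in> E" by blast
    have g0c: "continuous_on {0..} \<gamma>0" using g0 space_eta unfolding E_def curves_def by blast
    have g0Y: "\<forall>q\<in>\<rat> \<inter> {s..<u}. \<gamma>0 q = Y q" using g0 unfolding E_def by blast
    have "AE \<gamma> in \<eta>. \<gamma> s = p \<longrightarrow> \<gamma> u = \<gamma>0 u"
      using AEY AE_space
    proof eventually_elim
      case (elim \<gamma>)
      show ?case
      proof
        assume ps: "\<gamma> s = p"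
        have gY: "\<forall>q\<in>\<rat> \<inter> {s..<u}. \<gamma> q = Y q" using elim(1) ps by blast
        have gc: "continuous_on {0..} \<gamma>" using elim(2) space_eta unfolding curves_def by blast
        have agree: "\<forall>q\<in>\<rat>. s < q \<and> q < u \<longrightarrow> \<gamma> q = \<gamma>0 q"
        proof (intro ballI impI)
          fix q assume "q \<in> \<rat>" "s < q \<and> q < u"
          then have qq: "q \<in> \<rat> \<inter> {s..<u}" by auto
          have "\<gamma> q = Y q" using gY qq by blast
          moreover have "\<gamma>0 q = Y q" using g0Y qq by blast
          ultimately show "\<gamma> q = \<gamma>0 q" by simp
        qed
        show "\<gamma> u = \<gamma>0 u"
          by (rule agree_interval[OF gc g0c s(1) s(2) agree]) (use s in simp)
      qed
    qed
    then show ?thesis by (rule exI)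
  qed
qed

lemma right_step':
  assumes u: "0 \<le> u" and Q: "Qp s u"
  shows "\<exists>\<delta>>0. \<forall>t\<in>{u..<u+\<delta>}. Qp s t"
proof -
  obtain \<delta> g where \<delta>: "\<delta> > 0" and g: "AE \<gamma> in \<eta>. \<forall>t\<in>{u..<u+\<delta>}. \<gamma> t = g (\<gamma> u) t"
    using right_step[OF u] by blast
  have "Qp s t" if t: "t \<in> {u..<u+\<delta>}" for t
    unfolding Qp_def
  proof
    fix p
    obtain y where y: "AE \<gamma> in \<eta>. \<gamma> s = p \<longrightarrow> \<gamma> u = y" using Q unfolding Qp_def by blast
    have "AE \<gamma> in \<eta>. \<gamma> s = p \<longrightarrow> \<gamma> t = g y t"
      using y g
    proof eventually_elim
      case (elim \<gamma>)
      show ?case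
      proof
        assume "\<gamma> s = p"
        then have 1: "\<gamma> u = y" using elim(1) by blast
        have "\<gamma> t = g (\<gamma> u) t" using elim(2) t by blast
        then show "\<gamma> t = g y t" unfolding 1 .
      qed
    qed
    then show "\<exists>y. AE \<gamma> in \<eta>. \<gamma> s = p \<longrightarrow> \<gamma> t = y" by blast
  qed
  then show ?thesis using \<delta> by blast
qed

theorem core:
  assumes s: "0 \<le> s" and st: "s \<le> t"
  shows "\<exists>y. AE \<gamma> in \<eta>. \<gamma> s = p \<longrightarrow> \<gamma> t = y"
proof -
  have "Qp s t"
  proof (rule ccontr)
    assume nQ: "\<not> Qp s t"
    define B where "B = {t. s \<le> t \<and> \<not> Qp s t}"
    have Bne: "B \<noteq> {}" using nQ st by (auto simp: B_def)
    have bdd: "bdd_below B" by (auto simp: B_def bdd_below_def)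
    define u where "u = Inf B"
    have su: "s \<le> u" unfolding u_def by (rule cInf_greatest[OF Bne]) (auto simp: B_def)
    have below: "\<forall>t'\<in>{s..<u}. Qp s t'"
    proof
      fix t' assume t': "t' \<in> {s..<u}"
      show "Qp s t'"
      proof (rule ccontr)
        assume "\<not> Qp s t'"
        then have "t' \<in> B" using t' by (auto simp: B_def)
        then have "u \<le> t'" unfolding u_def by (rule cInf_lower[OF _ bdd])
        then show False using t' by auto
      qed
    qed
    have Qu: "Qp s u"
    proof (cases "u = s")
      case True
      then show ?thesis unfolding Qp_def by (intro allI, rule_tac x=p in exI) (auto intro!: AE_I2)
    next
      case False
      then show ?thesis using left_step[OF s _ below] su by auto
    qed
    obtain \<delta> where \<delta>: "\<delta> > 0" "\<forall>t\<in>{u..<u+\<delta>}. Qp s t"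
      using right_step'[OF _ Qu] s su by auto
    have "u + \<delta> \<le> Inf B"
    proof (rule cInf_greatest[OF Bne])
      fix b assume b: "b \<in> B"
      have "u \<le> b" unfolding u_def by (rule cInf_lower[OF b bdd])
      show "u + \<delta> \<le> b"
      proof (rule ccontr)
        assume "\<not> u + \<delta> \<le> b"
        then have "Qp s b" using \<delta> \<open>u \<le> b\<close> by auto
        then show False using b by (auto simp: B_def)
      qed
    qed
    then show False using \<delta> by (simp add: u_def)
  qed
  then show ?thesis by (auto simp: Qp_def)
qed

end


lemma AE_at_atom:
  assumes ae: "AE x in M. P x" and s: "{y} \<in> sets M" and pos: "emeasure M {y} > 0"
  shows "P y"
proof (rule ccontr)
  assume nP: "\<not> P y"
  from ae obtain Nn where Nn: "{x \<in> space M. \<not> P x} \<subseteq> Nn" "emeasure M Nn = 0" "Nn \<in> sets M"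
    by (rule AE_E)
  have "y \<in> space M" using sets.sets_into_space[OF s] by blast
  then have "{y} \<subseteq> Nn" using Nn(1) nP by blast
  then have "emeasure M {y} \<le> emeasure M Nn" by (rule emeasure_mono[OF _ Nn(3)])
  then show False using Nn(2) pos by simp
qed

lemma dirac_sum_singleton:
  assumes "{y} \<in> sets M"
  shows "emeasure (dirac_sum M N a p) {y} = (\<Sum>i<N. ennreal (a i) * indicator {y} (p i))"
  by (rule emeasure_dirac_sum[OF assms])

lemma sum_delta_distinct:
  fixes N :: nat
  assumes i: "i < N" and dist: "\<forall>i<N. \<forall>j<N. i \<noteq> j \<longrightarrow> p i \<noteq> p j"
  shows "(\<Sum>j<N. ennreal (a j) * indicator {p i} (p j)) = ennreal (a i)"
proof -
  have "(\<Sum>j<N. ennreal (a j) * indicator {p i} (p j)) = (\<Sum>j<N. if j = i then ennreal (a i) else 0)"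
  proof (rule sum.cong[OF refl])
    fix j assume "j \<in> {..<N}"
    show "ennreal (a j) * indicator {p i} (p j) = (if j = i then ennreal (a i) else 0)"
    proof (cases "j = i")
      case False
      then have "p j \<noteq> p i" using dist i \<open>j \<in> {..<N}\<close> by auto
      then show ?thesis using False by (simp add: indicator_def)
    qed simp
  qed
  also have "\<dots> = ennreal (a i)" using i by (subst sum.delta) auto
  finally show ?thesis .
qed

context liftctx begin

lemma AE_transfer:
  assumes t: "t \<ge> 0" and ae: "AE y in \<mu> t. y \<in> A" and A: "A \<in> sets borel"
  shows "AE \<gamma> in \<eta>. \<gamma> t \<in> A"
proof -
  have eq: "distr \<eta> borel (\<lambda>\<gamma>. \<gamma> t) = \<mu> t" using marg t by simp
  have "AE y in distr \<eta> borel (\<lambda>\<gamma>. \<gamma> t). y \<in> A" unfolding eq by (rule ae)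
  then show ?thesis
    by (subst (asm) AE_distr_iff[OF meas[OF t]]) (use A in auto)
qed

lemma emeasure_eval:
  assumes t: "t \<ge> 0" and A: "A \<in> sets borel"
  shows "emeasure \<eta> {\<gamma>\<in>space \<eta>. \<gamma> t \<in> A} = emeasure (\<mu> t) A"
proof -
  have eq: "distr \<eta> borel (\<lambda>\<gamma>. \<gamma> t) = \<mu> t" using marg t by simp
  have "emeasure (\<mu> t) A = emeasure \<eta> ((\<lambda>\<gamma>. \<gamma> t) -` A \<inter> space \<eta>)"
    unfolding eq[symmetric] by (rule emeasure_distr[OF meas[OF t] A])
  also have "(\<lambda>\<gamma>. \<gamma> t) -` A \<inter> space \<eta> = {\<gamma>\<in>space \<eta>. \<gamma> t \<in> A}" by auto
  finally show ?thesis by simp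
qed

lemma part1:
  fixes N :: nat and a :: "nat \<Rightarrow> real" and x :: "nat \<Rightarrow> 'a"
  assumes apos: "\<forall>i<N. a i > 0"
    and xdist: "\<forall>i<N. \<forall>j<N. i \<noteq> j \<longrightarrow> x i \<noteq> x j"
    and mu0: "\<mu> 0 = dirac_sum borel N a x"
  shows "\<exists>\<gamma>. (\<forall>i<N. \<gamma> i \<in> curves) \<and> \<eta> = dirac_sum path_borel N a \<gamma> \<and>
              (\<forall>i<N. \<forall>j<N. i \<noteq> j \<longrightarrow> \<gamma> i \<noteq> \<gamma> j) \<and>
              (\<forall>i<N. \<gamma> i 0 = x i) \<and>
              (\<forall>i<N. \<forall>j<N. \<forall>s\<ge>0. i \<noteq> j \<and> \<gamma> i s = \<gamma> j s \<longrightarrow>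
                  (\<forall>t\<ge>s. \<gamma> i t = \<gamma> j t))"
proof -
  define C where "C i = {\<gamma>\<in>space \<eta>. \<gamma> 0 = x i}" for i
  have Cmeas: "C i \<in> sets \<eta>" for i
    using measurable_sets[OF meas[of 0], of "{x i}"] by (simp add: C_def vimage_def Int_def conj_commute)
  have Cmass: "emeasure \<eta> (C i) = ennreal (a i)" if i: "i < N" for i
  proof -
    have "emeasure \<eta> (C i) = emeasure (\<mu> 0) {x i}"
      using emeasure_eval[of 0 "{x i}"] by (simp add: C_def)
    also have "\<dots> = (\<Sum>j<N. ennreal (a j) * indicator {x i} (x j))"
      unfolding mu0 by (rule emeasure_dirac_sum) simp
    also have "\<dots> = ennreal (a i)" by (rule sum_delta_distinct[OF i xdist])
    finally show ?thesis .
  qed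
  define X0 where "X0 = x ` {..<N}"
  have AE0: "AE \<gamma> in \<eta>. \<gamma> 0 \<in> X0"
  proof (rule AE_transfer[of 0])
    have "emeasure (\<mu> 0) (UNIV - X0) = (\<Sum>j<N. ennreal (a j) * indicator (UNIV - X0) (x j))"
      unfolding mu0 by (rule emeasure_dirac_sum) (simp add: X0_def finite_imp_closed borel_closed Diff_eq)
    also have "\<dots> = 0" by (simp add: X0_def)
    finally have "UNIV - X0 \<in> null_sets (\<mu> 0)"
      by (simp add: null_sets_def mu0 sets_dirac_sum X0_def finite_imp_closed borel_closed Diff_eq)
    then show "AE y in \<mu> 0. y \<in> X0"
      by (rule AE_I') auto
    show "X0 \<in> sets borel" by (simp add: X0_def finite_imp_closed borel_closed)
  qed simp
  define R where "R = \<rat> \<inter> {0::real..}"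
  have cR: "countable R" unfolding R_def by (rule countable_subset[OF _ countable_rat]) blast
  have "\<forall>i\<in>{..<N}. \<forall>q\<in>R. \<exists>y. AE \<gamma> in \<eta>. \<gamma> 0 = x i \<longrightarrow> \<gamma> q = y"
    using core by (auto simp: R_def)
  then have "\<forall>iq\<in>{..<N} \<times> R. \<exists>y. AE \<gamma> in \<eta>. \<gamma> 0 = x (fst iq) \<longrightarrow> \<gamma> (snd iq) = y"
    by auto
  from bchoice[OF this] obtain Yp where
    Yp: "\<forall>iq\<in>{..<N} \<times> R. AE \<gamma> in \<eta>. \<gamma> 0 = x (fst iq) \<longrightarrow> \<gamma> (snd iq) = Yp iq" by blast
  define Y where "Y i q = Yp (i, q)" for i q
  have cNR: "countable ({..<N} \<times> R)" using cR by simp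
  have AEY': "AE \<gamma> in \<eta>. \<forall>iq\<in>{..<N} \<times> R. \<gamma> 0 = x (fst iq) \<longrightarrow> \<gamma> (snd iq) = Yp iq"
    using AE_ball_countable'[where I="{..<N} \<times> R" and M=\<eta> and P="\<lambda>iq \<gamma>. \<gamma> 0 = x (fst iq) \<longrightarrow> \<gamma> (snd iq) = Yp iq"] Yp cNR
    by blast
  define good where "good \<gamma> \<longleftrightarrow> \<gamma> \<in> space \<eta> \<and> \<gamma> 0 \<in> X0 \<and>
       (\<forall>i<N. \<forall>q\<in>R. \<gamma> 0 = x i \<longrightarrow> \<gamma> q = Y i q)" for \<gamma>
  have AEgood: "AE \<gamma> in \<eta>. good \<gamma>"
    using AEY' AE0 AE_space
  proof eventually_elim
    case (elim \<gamma>)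
    have "\<forall>i<N. \<forall>q\<in>R. \<gamma> 0 = x i \<longrightarrow> \<gamma> q = Y i q"
    proof (intro allI impI ballI)
      fix i q assume "i < N" "q \<in> R" "\<gamma> 0 = x i"
      then show "\<gamma> q = Y i q" using elim(1) unfolding Y_def by (metis SigmaI fst_conv lessThan_iff snd_conv)
    qed
    then show ?case using elim(2,3) unfolding good_def by blast
  qed
  have ex: "\<exists>\<gamma>. good \<gamma> \<and> \<gamma> 0 = x i" if i: "i < N" for i
  proof -
    have "emeasure \<eta> {\<gamma>\<in>space \<eta>. \<gamma> 0 = x i} > 0"
      using Cmass[OF i] apos i by (simp add: C_def)
    from exists_in_AE[OF AEgood _ this] show ?thesis by auto
  qed
  define \<Gamma> where "\<Gamma> i = (SOME \<gamma>. good \<gamma> \<and> \<gamma> 0 = x i)" for i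
  have \<Gamma>: "good (\<Gamma> i) \<and> \<Gamma> i 0 = x i" if "i < N" for i
    unfolding \<Gamma>_def by (rule someI_ex[OF ex[OF that]])
  have \<Gamma>c: "\<Gamma> i \<in> curves" if "i < N" for i
    using \<Gamma>[OF that] space_eta unfolding good_def by blast
  have uniq: "\<gamma> = \<Gamma> i" if g: "good \<gamma>" and i: "i < N" and g0: "\<gamma> 0 = x i" for \<gamma> i
  proof (rule curves_eqI)
    show "\<gamma> \<in> curves" using g space_eta unfolding good_def by blast
    show "\<Gamma> i \<in> curves" by (rule \<Gamma>c[OF i])
    show "\<forall>q\<in>\<rat>. 0 \<le> q \<longrightarrow> \<gamma> q = \<Gamma> i q"
    proof (intro ballI impI)
      fix q :: real assume "q \<in> \<rat>" "0 \<le> q"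
      then have q: "q \<in> R" by (simp add: R_def)
      have "\<gamma> q = Y i q" using g i g0 q unfolding good_def by blast
      moreover have "\<Gamma> i q = Y i q" using \<Gamma>[OF i] i q unfolding good_def by blast
      ultimately show "\<gamma> q = \<Gamma> i q" by simp
    qed
  qed
  have sing: "{\<Gamma> i} \<in> sets \<eta>" if "i < N" for i
    using singleton_meas[OF \<Gamma>c[OF that]] sets_eta by simp
  have mass: "emeasure \<eta> {\<Gamma> i} = ennreal (a i)" if i: "i < N" for i
  proof -
    have "emeasure \<eta> {\<Gamma> i} = emeasure \<eta> (C i)"
    proof (rule emeasure_eq_AE[OF _ sing[OF i] Cmeas])
      show "AE \<gamma> in \<eta>. (\<gamma> \<in> {\<Gamma> i}) = (\<gamma> \<in> C i)"
        using AEgood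
      proof eventually_elim
        case (elim \<gamma>)
        show ?case
        proof
          assume "\<gamma> \<in> {\<Gamma> i}"
          then show "\<gamma> \<in> C i" using \<Gamma>[OF i] unfolding C_def good_def by blast
        next
          assume "\<gamma> \<in> C i"
          then show "\<gamma> \<in> {\<Gamma> i}" using uniq[OF elim i] unfolding C_def by blast
        qed
      qed
    qed
    then show ?thesis using Cmass[OF i] by simp
  qed
  have inj: "inj_on \<Gamma> {..<N}"
  proof (rule inj_onI)
    fix i j assume "i \<in> {..<N}" "j \<in> {..<N}" "\<Gamma> i = \<Gamma> j"
    then show "i = j" using \<Gamma> xdist by (metis lessThan_iff)
  qed
  have AEin: "AE \<gamma> in \<eta>. \<gamma> \<in> \<Gamma> ` {..<N}"
    using AEgood
  proof eventually_elim
    case (elim \<gamma>)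
    then obtain i where "i < N" "\<gamma> 0 = x i" unfolding good_def X0_def by blast
    then show ?case using uniq[OF elim] by blast
  qed
  have eta_eq: "\<eta> = dirac_sum path_borel N a \<Gamma>"
  proof (rule measure_eqI)
    show "sets \<eta> = sets (dirac_sum path_borel N a \<Gamma>)" by (simp add: sets_dirac_sum sets_eta)
    fix A assume A: "A \<in> sets \<eta>"
    define I where "I = {i\<in>{..<N}. \<Gamma> i \<in> A}"
    have fin\<Gamma>: "finite (\<Gamma> ` I)" by (simp add: I_def)
    have sub: "\<Gamma> ` I \<subseteq> A" unfolding I_def by blast
    have "\<Gamma> ` I = (\<Union>i\<in>I. {\<Gamma> i})" by blast
    also have "\<dots> \<in> sets \<eta>"
      by (rule sets.finite_UN) (auto simp: I_def sing)
    finally have setsI: "\<Gamma> ` I \<in> sets \<eta>" .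
    have "emeasure \<eta> A = emeasure \<eta> (\<Gamma> ` I)"
    proof (rule emeasure_eq_AE[OF _ A setsI])
      show "AE \<gamma> in \<eta>. (\<gamma> \<in> A) = (\<gamma> \<in> \<Gamma> ` I)"
        using AEin
      proof eventually_elim
        case (elim \<gamma>)
        then show ?case using sub unfolding I_def by blast
      qed
    qed
    also have "\<dots> = (\<Sum>y\<in>\<Gamma> ` I. emeasure \<eta> {y})"
      by (rule emeasure_eq_sum_singleton[OF fin\<Gamma>]) (auto simp: I_def sing)
    also have "\<dots> = (\<Sum>i\<in>I. emeasure \<eta> {\<Gamma> i})"
      by (rule sum.reindex[unfolded comp_def]) (rule inj_on_subset[OF inj], auto simp: I_def)
    also have "\<dots> = (\<Sum>i\<in>I. ennreal (a i))"
      by (rule sum.cong[OF refl]) (simp add: I_def mass)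
    also have "\<dots> = (\<Sum>i<N. if \<Gamma> i \<in> A then ennreal (a i) else 0)"
      unfolding I_def by (rule sum.inter_filter) simp
    also have "\<dots> = (\<Sum>i<N. ennreal (a i) * indicator A (\<Gamma> i))"
      by (rule sum.cong[OF refl]) (simp add: indicator_def)
    also have "\<dots> = emeasure (dirac_sum path_borel N a \<Gamma>) A"
      by (rule emeasure_dirac_sum[symmetric]) (use A sets_eta in simp)
    finally show "emeasure \<eta> A = emeasure (dirac_sum path_borel N a \<Gamma>) A" .
  qed
  have P3: "\<forall>t\<ge>s. \<Gamma> i t = \<Gamma> j t"
    if ij: "i < N" "j < N" "s \<ge> 0" "\<Gamma> i s = \<Gamma> j s" for i j s
  proof (intro allI impI)
    fix t assume st: "s \<le> t"
    obtain y where y: "AE \<gamma> in \<eta>. \<gamma> s = \<Gamma> i s \<longrightarrow> \<gamma> t = y"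
      using core[OF ij(3) st] by blast
    have pi: "emeasure \<eta> {\<Gamma> i} > 0" using mass[OF ij(1)] apos ij by simp
    have pj: "emeasure \<eta> {\<Gamma> j} > 0" using mass[OF ij(2)] apos ij by simp
    have "\<Gamma> i s = \<Gamma> i s \<longrightarrow> \<Gamma> i t = y" by (rule AE_at_atom[OF y sing[OF ij(1)] pi])
    moreover have "\<Gamma> j s = \<Gamma> i s \<longrightarrow> \<Gamma> j t = y" by (rule AE_at_atom[OF y sing[OF ij(2)] pj])
    ultimately show "\<Gamma> i t = \<Gamma> j t" using ij(4) by simp
  qed
  show ?thesis
  proof (intro exI conjI)
    show "\<forall>i<N. \<Gamma> i \<in> curves" using \<Gamma>c by blast
    show "\<eta> = dirac_sum path_borel N a \<Gamma>" by (rule eta_eq)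
    show "\<forall>i<N. \<forall>j<N. i \<noteq> j \<longrightarrow> \<Gamma> i \<noteq> \<Gamma> j" using inj by (auto simp: inj_on_def)
    show "\<forall>i<N. \<Gamma> i 0 = x i" using \<Gamma> by blast
    show "\<forall>i<N. \<forall>j<N. \<forall>s\<ge>0. i \<noteq> j \<and> \<Gamma> i s = \<Gamma> j s \<longrightarrow> (\<forall>t\<ge>s. \<Gamma> i t = \<Gamma> j t)"
      using P3 by blast
  qed
qed

end


definition mix :: "(real \<Rightarrow> 'a::metric_space) measure \<Rightarrow> (real \<Rightarrow> 'a) measure \<Rightarrow> (real \<Rightarrow> 'a) measure" where
  "mix M1 M2 = measure_of curves (sets path_borel) (\<lambda>A. ennreal (1/2) * (emeasure M1 A + emeasure M2 A))"

lemma mix_alt: "mix M1 M2 = measure_of (space path_borel) (sets path_borel) (\<lambda>A. ennreal (1/2) * (emeasure M1 A + emeasure M2 A))"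
  by (simp add: mix_def space_path_borel)

lemma sets_mix: "sets (mix M1 M2) = sets path_borel"
  unfolding mix_alt by (rule sets.sets_measure_of_eq)

lemma space_mix: "space (mix M1 M2) = curves"
  unfolding mix_alt sets.space_measure_of_eq by (rule space_path_borel)

lemma emeasure_mix:
  assumes s1: "sets M1 = sets path_borel" and s2: "sets M2 = sets path_borel"
    and A: "A \<in> sets path_borel"
  shows "emeasure (mix M1 M2) A = ennreal (1/2) * (emeasure M1 A + emeasure M2 A)"
proof (rule emeasure_measure_of[OF mix_alt])
  show "sets path_borel \<subseteq> Pow (space path_borel)" by (rule sets.space_closed)
  show "positive (sets (mix M1 M2)) (\<lambda>A. ennreal (1/2) * (emeasure M1 A + emeasure M2 A))"
    by (simp add: positive_def)
  show "countably_additive (sets (mix M1 M2)) (\<lambda>A. ennreal (1/2) * (emeasure M1 A + emeasure M2 A))"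
    unfolding countably_additive_def
  proof (intro allI impI)
    fix F :: "nat \<Rightarrow> _" assume F: "range F \<subseteq> sets (mix M1 M2)" "disjoint_family F"
    have F1: "range F \<subseteq> sets M1" and F2: "range F \<subseteq> sets M2" using F(1) s1 s2 by (auto simp: sets_mix)
    have "(\<Sum>n. ennreal (1/2) * (emeasure M1 (F n) + emeasure M2 (F n)))
        = ennreal (1/2) * ((\<Sum>n. emeasure M1 (F n)) + (\<Sum>n. emeasure M2 (F n)))"
      by (simp add: suminf_add)
    also have "\<dots> = ennreal (1/2) * (emeasure M1 (\<Union>n. F n) + emeasure M2 (\<Union>n. F n))"
      using suminf_emeasure[OF F1 F(2)] suminf_emeasure[OF F2 F(2)] by simp
    finally show "(\<Sum>n. ennreal (1/2) * (emeasure M1 (F n) + emeasure M2 (F n))) =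
        ennreal (1/2) * (emeasure M1 (\<Union> (range F)) + emeasure M2 (\<Union> (range F)))" by simp
  qed
  show "A \<in> sets (mix M1 M2)" using A by (simp add: sets_mix)
qed

lemma half_double: "ennreal (1/2) * (m + m) = m"
proof -
  have "ennreal (1/2) * (m + m) = (ennreal (1/2) * ennreal 2) * m"
    by (simp add: mult_2[symmetric] mult.assoc)
  also have "ennreal (1/2) * ennreal 2 = ennreal ((1/2) * 2)"
    by (rule ennreal_mult[symmetric]) auto
  also have "ennreal ((1/2) * 2) = 1" by simp
  finally show ?thesis by simp
qed

lemma mix_lifts:
  fixes \<mu> :: "real \<Rightarrow> 'a::real_normed_vector measure"
  assumes l1: "lifts \<mu> \<eta>1" and l2: "lifts \<mu> \<eta>2"
  shows "lifts \<mu> (mix \<eta>1 \<eta>2)"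
proof -
  have s1: "sets \<eta>1 = sets path_borel" and s2: "sets \<eta>2 = sets path_borel"
    and p1: "prob_space \<eta>1" and p2: "prob_space \<eta>2"
    and m1: "\<forall>t\<ge>0. distr \<eta>1 borel (\<lambda>\<gamma>. \<gamma> t) = \<mu> t"
    and m2: "\<forall>t\<ge>0. distr \<eta>2 borel (\<lambda>\<gamma>. \<gamma> t) = \<mu> t"
    using l1 l2 unfolding lifts_def by auto
  have sp1: "space \<eta>1 = curves" using sets_eq_imp_space_eq[OF s1] space_path_borel by simp
  have sp2: "space \<eta>2 = curves" using sets_eq_imp_space_eq[OF s2] space_path_borel by simp
  have "prob_space (mix \<eta>1 \<eta>2)"
  proof
    have "emeasure (mix \<eta>1 \<eta>2) (space (mix \<eta>1 \<eta>2)) = ennreal (1/2) * (emeasure \<eta>1 curves + emeasure \<eta>2 curves)"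
      unfolding space_mix by (rule emeasure_mix[OF s1 s2]) (metis sets.top space_path_borel)
    also have "\<dots> = ennreal (1/2) * (1 + 1)"
      using prob_space.emeasure_space_1[OF p1] prob_space.emeasure_space_1[OF p2] sp1 sp2 by simp
    also have "\<dots> = 1" by (rule half_double)
    finally show "emeasure (mix \<eta>1 \<eta>2) (space (mix \<eta>1 \<eta>2)) = 1" .
  qed
  moreover have "\<forall>t\<ge>0. distr (mix \<eta>1 \<eta>2) borel (\<lambda>\<gamma>. \<gamma> t) = \<mu> t"
  proof (intro allI impI)
    fix t :: real assume t: "t \<ge> 0"
    have e1: "distr \<eta>1 borel (\<lambda>\<gamma>. \<gamma> t) = \<mu> t" using m1 t by simp
    have e2: "distr \<eta>2 borel (\<lambda>\<gamma>. \<gamma> t) = \<mu> t" using m2 t by simp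
    show "distr (mix \<eta>1 \<eta>2) borel (\<lambda>\<gamma>. \<gamma> t) = \<mu> t"
    proof (rule measure_eqI)
      show "sets (distr (mix \<eta>1 \<eta>2) borel (\<lambda>\<gamma>. \<gamma> t)) = sets (\<mu> t)"
        using e1 by (metis sets_distr)
      fix A assume "A \<in> sets (distr (mix \<eta>1 \<eta>2) borel (\<lambda>\<gamma>. \<gamma> t))"
      then have A: "A \<in> sets borel" by simp
      have mm: "(\<lambda>\<gamma>. \<gamma> t) \<in> measurable (mix \<eta>1 \<eta>2) borel"
        by (rule eval_measurable[OF t sets_mix])
      have mm1: "(\<lambda>\<gamma>. \<gamma> t) \<in> measurable \<eta>1 borel" by (rule eval_measurable[OF t s1])
      have mm2: "(\<lambda>\<gamma>. \<gamma> t) \<in> measurable \<eta>2 borel" by (rule eval_measurable[OF t s2])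
      define P where "P = (\<lambda>\<gamma>. \<gamma> t) -` A \<inter> curves"
      have P1: "P = (\<lambda>\<gamma>. \<gamma> t) -` A \<inter> space \<eta>1" using sp1 by (simp add: P_def)
      have P2: "P = (\<lambda>\<gamma>. \<gamma> t) -` A \<inter> space \<eta>2" using sp2 by (simp add: P_def)
      have Pm: "P \<in> sets path_borel" using measurable_sets[OF mm1 A] P1 s1 by simp
      have "emeasure (distr (mix \<eta>1 \<eta>2) borel (\<lambda>\<gamma>. \<gamma> t)) A = emeasure (mix \<eta>1 \<eta>2) P"
        using emeasure_distr[OF mm A] by (simp add: P_def space_mix)
      also have "\<dots> = ennreal (1/2) * (emeasure \<eta>1 P + emeasure \<eta>2 P)"
        by (rule emeasure_mix[OF s1 s2 Pm])
      also have "emeasure \<eta>1 P = emeasure (\<mu> t) A"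
        using emeasure_distr[OF mm1 A] e1 P1 by simp
      also have "emeasure \<eta>2 P = emeasure (\<mu> t) A"
        using emeasure_distr[OF mm2 A] e2 P2 by simp
      finally show "emeasure (distr (mix \<eta>1 \<eta>2) borel (\<lambda>\<gamma>. \<gamma> t)) A = emeasure (\<mu> t) A"
        by (simp only: half_double)
    qed
  qed
  ultimately show ?thesis unfolding lifts_def using sets_mix by blast
qed



lemma dirac_sum_cong:
  assumes "\<forall>i<N. p i = p' i"
  shows "dirac_sum M N a p = dirac_sum M N a p'"
  unfolding dirac_sum_def
  by (rule arg_cong[where f="measure_of (space M) (sets M)"], rule ext, rule sum.cong[OF refl]) (simp add: assms)

theorem theoremB1:
  fixes N :: nat and a :: "nat \<Rightarrow> real" and x :: "nat \<Rightarrow> 'a::{real_inner, polish_space}"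
    and \<mu> :: "real \<Rightarrow> 'a measure"
  assumes "N \<ge> 1"
    and "\<forall>i<N. a i > 0"
    and "(\<Sum>i<N. a i) = 1"
    and "\<forall>i<N. \<forall>j<N. i \<noteq> j \<longrightarrow> x i \<noteq> x j"
    and "\<forall>t\<ge>0. \<mu> t \<in> P2"
    and "\<mu> 0 = dirac_sum borel N a x"
    and "\<forall>t\<ge>0. finite (msupp (\<mu> t))"
    and "\<forall>s t. 0 \<le> s \<longrightarrow> s \<le> t \<longrightarrow> card (msupp (\<mu> t)) \<le> card (msupp (\<mu> s))"
  shows "(\<forall>\<eta>. lifts \<mu> \<eta> \<longrightarrow>
           (\<exists>\<gamma>. (\<forall>i<N. \<gamma> i \<in> curves) \<and> \<eta> = dirac_sum path_borel N a \<gamma> \<and>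
              (\<forall>i<N. \<forall>j<N. i \<noteq> j \<longrightarrow> \<gamma> i \<noteq> \<gamma> j) \<and>
              (\<forall>i<N. \<gamma> i 0 = x i) \<and>
              (\<forall>i<N. \<forall>j<N. \<forall>s\<ge>0. i \<noteq> j \<and> \<gamma> i s = \<gamma> j s \<longrightarrow>
                  (\<forall>t\<ge>s. \<gamma> i t = \<gamma> j t))))
       \<and> (\<forall>\<eta>1 \<eta>2. lifts \<mu> \<eta>1 \<and> lifts \<mu> \<eta>2 \<longrightarrow> \<eta>1 = \<eta>2)"
proof -
  have ctx: "liftctx \<eta> \<mu>" if l: "lifts \<mu> \<eta>" for \<eta>
  proof -
    have "prob_space \<eta> \<and> sets \<eta> = sets path_borel \<and> (\<forall>t\<ge>0. distr \<eta> borel (\<lambda>\<gamma>. \<gamma> t) = \<mu> t)"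
      using l unfolding lifts_def .
    then show ?thesis using assms(7,8) unfolding liftctx_def by blast
  qed
  have part1: "\<exists>\<gamma>. (\<forall>i<N. \<gamma> i \<in> curves) \<and> \<eta> = dirac_sum path_borel N a \<gamma> \<and>
              (\<forall>i<N. \<forall>j<N. i \<noteq> j \<longrightarrow> \<gamma> i \<noteq> \<gamma> j) \<and>
              (\<forall>i<N. \<gamma> i 0 = x i) \<and>
              (\<forall>i<N. \<forall>j<N. \<forall>s\<ge>0. i \<noteq> j \<and> \<gamma> i s = \<gamma> j s \<longrightarrow>
                  (\<forall>t\<ge>s. \<gamma> i t = \<gamma> j t))" if l: "lifts \<mu> \<eta>" for \<eta>
    by (rule liftctx.part1[OF ctx[OF l] assms(2) assms(4) assms(6)])
  have same: "\<Gamma>1 i = \<Gamma>3 i"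
    if l1: "lifts \<mu> \<eta>1" and l2: "lifts \<mu> \<eta>2"
      and c1: "\<forall>i<N. \<Gamma>1 i \<in> curves" and e1: "\<eta>1 = dirac_sum path_borel N a \<Gamma>1"
      and d1: "\<forall>i<N. \<forall>j<N. i \<noteq> j \<longrightarrow> \<Gamma>1 i \<noteq> \<Gamma>1 j" and z1: "\<forall>i<N. \<Gamma>1 i 0 = x i"
      and e3: "mix \<eta>1 \<eta>2 = dirac_sum path_borel N a \<Gamma>3" and z3: "\<forall>i<N. \<Gamma>3 i 0 = x i"
      and i: "i < N"
    for \<eta>1 \<eta>2 \<Gamma>1 \<Gamma>3 i
  proof -
    have s1: "sets \<eta>1 = sets path_borel" and s2: "sets \<eta>2 = sets path_borel"
      using l1 l2 unfolding lifts_def by auto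
    have sing: "{\<Gamma>1 i} \<in> sets path_borel" by (rule singleton_meas) (use c1 i in blast)
    have m1: "emeasure \<eta>1 {\<Gamma>1 i} = ennreal (a i)"
      unfolding e1 emeasure_dirac_sum[OF sing] by (rule sum_delta_distinct[OF i d1])
    have "emeasure (mix \<eta>1 \<eta>2) {\<Gamma>1 i} = ennreal (1/2) * (emeasure \<eta>1 {\<Gamma>1 i} + emeasure \<eta>2 {\<Gamma>1 i})"
      by (rule emeasure_mix[OF s1 s2 sing])
    also have "\<dots> > 0"
    proof -
      have "a i > 0" using assms(2) i by blast
      then have "ennreal (a i) \<noteq> 0" by simp
      then show ?thesis using m1 by (simp add: zero_less_iff_neq_zero)
    qed
    finally have pos: "emeasure (mix \<eta>1 \<eta>2) {\<Gamma>1 i} > 0" .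
    have sumeq: "emeasure (mix \<eta>1 \<eta>2) {\<Gamma>1 i} = (\<Sum>j<N. ennreal (a j) * indicator {\<Gamma>1 i} (\<Gamma>3 j))"
      unfolding e3 by (rule emeasure_dirac_sum[OF sing])
    have "\<exists>j<N. \<Gamma>3 j = \<Gamma>1 i"
    proof (rule ccontr)
      assume "\<not> (\<exists>j<N. \<Gamma>3 j = \<Gamma>1 i)"
      then have "\<forall>j\<in>{..<N}. ennreal (a j) * indicator {\<Gamma>1 i} (\<Gamma>3 j) = 0"
        by (auto simp: indicator_def)
      then have "(\<Sum>j<N. ennreal (a j) * indicator {\<Gamma>1 i} (\<Gamma>3 j)) = 0"
        by (rule sum.neutral)
      then show False using pos sumeq by simp
    qed
    then obtain j where j: "j < N" "\<Gamma>3 j = \<Gamma>1 i" by blast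
    have "x j = \<Gamma>3 j 0" using z3 j(1) by simp
    also have "\<dots> = x i" using z1 j(2) i by simp
    finally have "x j = x i" .
    then have "j = i" using assms(4) i j by blast
    then show ?thesis using j by simp
  qed
  show ?thesis
  proof (intro conjI allI impI)
    fix \<eta> assume "lifts \<mu> \<eta>"
    then show "\<exists>\<gamma>. (\<forall>i<N. \<gamma> i \<in> curves) \<and> \<eta> = dirac_sum path_borel N a \<gamma> \<and>
              (\<forall>i<N. \<forall>j<N. i \<noteq> j \<longrightarrow> \<gamma> i \<noteq> \<gamma> j) \<and>
              (\<forall>i<N. \<gamma> i 0 = x i) \<and>
              (\<forall>i<N. \<forall>j<N. \<forall>s\<ge>0. i \<noteq> j \<and> \<gamma> i s = \<gamma> j s \<longrightarrow>
                  (\<forall>t\<ge>s. \<gamma> i t = \<gamma> j t))" by (rule part1)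
  next
    fix \<eta>1 \<eta>2 assume "lifts \<mu> \<eta>1 \<and> lifts \<mu> \<eta>2"
    then have l1: "lifts \<mu> \<eta>1" and l2: "lifts \<mu> \<eta>2" by auto
    have l3: "lifts \<mu> (mix \<eta>1 \<eta>2)" by (rule mix_lifts[OF l1 l2])
    have l3': "lifts \<mu> (mix \<eta>2 \<eta>1)" by (rule mix_lifts[OF l2 l1])
    obtain \<Gamma>1 where G1: "(\<forall>i<N. \<Gamma>1 i \<in> curves)" "\<eta>1 = dirac_sum path_borel N a \<Gamma>1"
        "\<forall>i<N. \<forall>j<N. i \<noteq> j \<longrightarrow> \<Gamma>1 i \<noteq> \<Gamma>1 j" "\<forall>i<N. \<Gamma>1 i 0 = x i"
      using part1[OF l1] by (elim exE conjE) (rule that)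
    obtain \<Gamma>2 where G2: "(\<forall>i<N. \<Gamma>2 i \<in> curves)" "\<eta>2 = dirac_sum path_borel N a \<Gamma>2"
        "\<forall>i<N. \<forall>j<N. i \<noteq> j \<longrightarrow> \<Gamma>2 i \<noteq> \<Gamma>2 j" "\<forall>i<N. \<Gamma>2 i 0 = x i"
      using part1[OF l2] by (elim exE conjE) (rule that)
    obtain \<Gamma>3 where G3: "mix \<eta>1 \<eta>2 = dirac_sum path_borel N a \<Gamma>3" "\<forall>i<N. \<Gamma>3 i 0 = x i"
      using part1[OF l3] by (elim exE conjE) (rule that)
    have mixc: "mix \<eta>2 \<eta>1 = mix \<eta>1 \<eta>2" unfolding mix_def
      by (rule arg_cong[where f = "measure_of curves (sets path_borel)"], rule ext) (simp only: add.commute)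
    have G3': "mix \<eta>2 \<eta>1 = dirac_sum path_borel N a \<Gamma>3" using G3(1) mixc by simp
    have "\<forall>i<N. \<Gamma>1 i = \<Gamma>3 i"
      using same[OF l1 l2 G1(1) G1(2) G1(3) G1(4) G3(1) G3(2)] by blast
    moreover have "\<forall>i<N. \<Gamma>2 i = \<Gamma>3 i"
      using same[OF l2 l1 G2(1) G2(2) G2(3) G2(4) G3' G3(2)] by blast
    ultimately have "\<forall>i<N. \<Gamma>1 i = \<Gamma>2 i" by simp
    then have "dirac_sum path_borel N a \<Gamma>1 = dirac_sum path_borel N a \<Gamma>2" by (rule dirac_sum_cong)
    then show "\<eta>1 = \<eta>2" using G1(2) G2(2) by simp
  qed
qed


end
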